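(* If $\mathcal{R}$ is a call-by-value coupled logical bisimulation, then so is $\mathcal{R}^V=\left(\mathcal{R}_1^\star,\ \mathcal{R}_2\langle\mathcal{R}_1^\star\rangle_v\cup\mathcal{R}_1^\star\right)$. Consequently: if $M\approx^v_1 N$ then $C[M]\approx^v_1 C[N]$ for every context $C$ with $C[M],C[N]$ closed; and if $E\approx^v_2 F$ then $\mathcal{E}[E]\approx^v_2\mathcal{E}[F]$ for every call-by-value evaluation context $\mathcal{E}$.
   Context: $\Lambda^\bullet$ is the set of closed $\lambda$-terms; values are closed abstractions. Call-by-value reduction on closed terms: $MN\longrightarrow MN'$ if $N\longrightarrow N'$; $MV\longrightarrow M'V$ if $M\longrightarrow M'$ and $V$ is a value; $(\lambda x.P)V\longrightarrow P[V/x]$ if $V$ is a value; $\Longrightarrow$ is the reflexive transitive closure. Contexts are generated by $C::=x\mid[\cdot]\mid C\,C\mid\lambda x.C$, possibly with several holes numbered left to right; $C[\widetilde M]$ fills the $i$-th hole with $M_i$; $C[M]$ fills every hole with $M$. For $\mathcal{R}\subseteq\Lambda^\bullet\times\Lambda^\bullet$, $\mathcal{R}^\star=\{(C[\widetilde M],C[\widetilde N]) : C\text{ a context},\ M_i\,\mathcal{R}\,N_i\ \forall i,\ C[\widetilde M],C[\widetilde N]\in\Lambda^\bullet\}$. For relations $\mathcal{R},\mathcal{R}'$ on $\Lambda^\bullet$, $\mathcal{R}\langle\mathcal{R}'\rangle_v$ is the least relation such that: $X\,\mathcal{R}\,Y$ implies $X\,\mathcal{R}\langle\mathcal{R}'\rangle_v\,Y$;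 if $M\,\mathcal{R}'\,N$ and $X\,\mathcal{R}\langle\mathcal{R}'\rangle_v\,Y$ then $MX\,\mathcal{R}\langle\mathcal{R}'\rangle_v\,NY$; if $V,W$ are values with $V\,\mathcal{R}'\,W$ and $X\,\mathcal{R}\langle\mathcal{R}'\rangle_v\,Y$ then $XV\,\mathcal{R}\langle\mathcal{R}'\rangle_v\,YW$. Call-by-value evaluation contexts: $\mathcal{E}::=[\cdot]\mid M\,\mathcal{E}\mid\mathcal{E}\,V$ ($M\in\Lambda^\bullet$, $V$ a value). A coupled relation is a pair $(\mathcal{R}_1,\mathcal{R}_2)$ of relations on $\Lambda^\bullet$ with $\mathcal{R}_1\subseteq\mathcal{R}_2$. It is a call-by-value coupled logical bisimulation if whenever $M\,\mathcal{R}_2\,N$: (1) if $M\longrightarrow M'$ then there is $N'$ with $N\Longrightarrow N'$ and $M'\,\mathcal{R}_2\,N'$; (2) if $M=\lambda x.M'$ then $N\Longrightarrow\lambda x.N'$ for some $N'$, $\lambda x.M'\,\mathcal{R}_1\,\lambda x.N'$, and for all values $P,Q$ with $P\,\mathcal{R}_1^\star\,Q$, $M'[P/x]\,\mathcal{R}_2\,N'[Q/x]$; (3) the converses of (1),(2) with $M$ and $N$ exchanged. $(\approx^v_1,\approx^v_2)$ is the componentwise union of all call-by-value coupled logical bisimulations. *)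

theory Defs
  imports Main
begin

section \<open>Pure lambda terms (de Bruijn indices, so alpha-equivalence is syntactic equality)\<close>

datatype trm = Var nat | App trm trm | Lam trm

fun closed_at :: "nat \<Rightarrow> trm \<Rightarrow> bool" where
  "closed_at k (Var i) = (i < k)"
| "closed_at k (App M N) = (closed_at k M \<and> closed_at k N)"
| "closed_at k (Lam M) = closed_at (Suc k) M"

definition closed :: "trm \<Rightarrow> bool" where
  "closed M = closed_at 0 M"

fun lift :: "nat \<Rightarrow> trm \<Rightarrow> trm" where
  "lift k (Var i) = (if i < k then Var i else Var (Suc i))"
| "lift k (App M N) = App (lift k M) (lift k N)"
| "lift k (Lam M) = Lam (lift (Suc k) M)"

fun subst :: "trm \<Rightarrow> nat \<Rightarrow> trm \<Rightarrow> trm" where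
  "subst (Var i) k P = (if i < k then Var i else if i = k then P else Var (i - 1))"
| "subst (App M N) k P = App (subst M k P) (subst N k P)"
| "subst (Lam M) k P = Lam (subst M (Suc k) (lift 0 P))"

definition is_val :: "trm \<Rightarrow> bool" where
  "is_val M = (closed M \<and> (\<exists>M'. M = Lam M'))"

section \<open>Call-by-value reduction (argument evaluated first)\<close>

inductive cbv :: "trm \<Rightarrow> trm \<Rightarrow> bool" where
  appR: "cbv N N' \<Longrightarrow> cbv (App M N) (App M N')"
| appL: "cbv M M' \<Longrightarrow> is_val V \<Longrightarrow> cbv (App M V) (App M' V)"
| beta: "is_val V \<Longrightarrow> cbv (App (Lam P) V) (subst P 0 V)"

abbreviation cbv_star :: "trm \<Rightarrow> trm \<Rightarrow> bool" where
  "cbv_star \<equiv> cbv\<^sup>*\<^sup>*"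

datatype ctx = CVar nat | Hole | CApp ctx ctx | CLam ctx

fun holes :: "ctx \<Rightarrow> nat" where
  "holes (CVar i) = 0"
| "holes Hole = 1"
| "holes (CApp C D) = holes C + holes D"
| "holes (CLam C) = holes C"

fun fill :: "ctx \<Rightarrow> trm list \<Rightarrow> trm" where
  "fill (CVar i) Ms = Var i"
| "fill Hole Ms = hd Ms"
| "fill (CApp C D) Ms = App (fill C (take (holes C) Ms)) (fill D (drop (holes C) Ms))"
| "fill (CLam C) Ms = Lam (fill C Ms)"

definition fill_all :: "ctx \<Rightarrow> trm \<Rightarrow> trm" where
  "fill_all C M = fill C (replicate (holes C) M)"

definition ctx_closure :: "trm rel \<Rightarrow> trm rel" where
  "ctx_closure R = {(fill C Ms, fill C Ns) | C Ms Ns.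
      length Ms = holes C \<and> list_all2 (\<lambda>M N. (M, N) \<in> R) Ms Ns \<and>
      closed (fill C Ms) \<and> closed (fill C Ns)}"

inductive_set bracket_v :: "trm rel \<Rightarrow> trm rel \<Rightarrow> trm rel" for R R' where
  base: "(X, Y) \<in> R \<Longrightarrow> (X, Y) \<in> bracket_v R R'"
| argR: "(M, N) \<in> R' \<Longrightarrow> (X, Y) \<in> bracket_v R R' \<Longrightarrow> (App M X, App N Y) \<in> bracket_v R R'"
| funL: "is_val V \<Longrightarrow> is_val W \<Longrightarrow> (V, W) \<in> R' \<Longrightarrow> (X, Y) \<in> bracket_v R R'
          \<Longrightarrow> (App X V, App Y W) \<in> bracket_v R R'"

datatype ectx = EHole | EArg trm ectx | EFun ectx trm

fun ectx_ok :: "ectx \<Rightarrow> bool" where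
  "ectx_ok EHole = True"
| "ectx_ok (EArg M E) = (closed M \<and> ectx_ok E)"
| "ectx_ok (EFun E V) = (is_val V \<and> ectx_ok E)"

fun efill :: "ectx \<Rightarrow> trm \<Rightarrow> trm" where
  "efill EHole M = M"
| "efill (EArg N E) M = App N (efill E M)"
| "efill (EFun E V) M = App (efill E M) V"

definition rel_closed :: "trm rel \<Rightarrow> bool" where
  "rel_closed R = (\<forall>(M, N) \<in> R. closed M \<and> closed N)"

definition coupled :: "trm rel \<Rightarrow> trm rel \<Rightarrow> bool" where
  "coupled R1 R2 = (rel_closed R1 \<and> rel_closed R2 \<and> R1 \<subseteq> R2)"

definition cbv_clb :: "trm rel \<Rightarrow> trm rel \<Rightarrow> bool" where
  "cbv_clb R1 R2 = (coupled R1 R2 \<and>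
    (\<forall>M N. (M, N) \<in> R2 \<longrightarrow>
      (\<forall>M'. cbv M M' \<longrightarrow> (\<exists>N'. cbv_star N N' \<and> (M', N') \<in> R2)) \<and>
      (\<forall>M'. M = Lam M' \<longrightarrow> (\<exists>N'. cbv_star N (Lam N') \<and> (Lam M', Lam N') \<in> R1 \<and>
          (\<forall>P Q. is_val P \<longrightarrow> is_val Q \<longrightarrow> (P, Q) \<in> ctx_closure R1 \<longrightarrow>
              (subst M' 0 P, subst N' 0 Q) \<in> R2))) \<and>
      (\<forall>N'. cbv N N' \<longrightarrow> (\<exists>M'. cbv_star M M' \<and> (M', N') \<in> R2)) \<and>
      (\<forall>N'. N = Lam N' \<longrightarrow> (\<exists>M'. cbv_star M (Lam M') \<and> (Lam M', Lam N') \<in> R1 \<and>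
          (\<forall>P Q. is_val P \<longrightarrow> is_val Q \<longrightarrow> (P, Q) \<in> ctx_closure R1 \<longrightarrow>
              (subst M' 0 P, subst N' 0 Q) \<in> R2)))))"

definition approx1 :: "trm rel" where
  "approx1 = \<Union>{R1. \<exists>R2. cbv_clb R1 R2}"

definition approx2 :: "trm rel" where
  "approx2 = \<Union>{R2. \<exists>R1. cbv_clb R1 R2}"

end

theory Submission
  imports Defs
begin

lemma closed_at_mono: "closed_at k M \<Longrightarrow> k \<le> n \<Longrightarrow> closed_at n M"
  by (induction M arbitrary: k n) auto

lemma lift_closed: "closed_at k M \<Longrightarrow> k \<le> n \<Longrightarrow> lift n M = M"
  by (induction M arbitrary: k n) auto

lemma subst_closed: "closed_at k M \<Longrightarrow> k \<le> n \<Longrightarrow> subst M n P = M"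
  by (induction M arbitrary: k n P) auto

lemma closed_subst: "closed_at (Suc k) M \<Longrightarrow> j \<le> k \<Longrightarrow> closed P \<Longrightarrow> closed_at k (subst M j P)"
proof (induction M arbitrary: k j P)
  case (Var i)
  then show ?case using closed_at_mono[of 0 P k] by (auto simp: closed_def)
next
  case (App M1 M2)
  then show ?case by auto
next
  case (Lam M)
  have "lift 0 P = P" using Lam.prems(3) lift_closed[of 0 P 0] by (simp add: closed_def)
  then show ?case using Lam by auto
qed

lemma cbv_closed: "cbv M M' \<Longrightarrow> closed M \<Longrightarrow> closed M'"
  by (induction rule: cbv.induct) (auto simp: closed_def is_val_def intro: closed_subst[of 0, simplified closed_def])

lemma cbv_star_closed: "cbv_star M M' \<Longrightarrow> closed M \<Longrightarrow> closed M'"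
  by (induction rule: rtranclp_induct) (auto intro: cbv_closed)

lemma star_appR: "cbv_star N N' \<Longrightarrow> cbv_star (App M N) (App M N')"
  by (induction rule: rtranclp_induct) (auto intro: rtranclp.rtrancl_into_rtrancl cbv.appR)

lemma star_appL: "cbv_star M M' \<Longrightarrow> is_val V \<Longrightarrow> cbv_star (App M V) (App M' V)"
  by (induction rule: rtranclp_induct) (auto intro: rtranclp.rtrancl_into_rtrancl cbv.appL)

inductive_set cc :: "trm rel \<Rightarrow> trm rel" for R where
  ccR: "(M, N) \<in> R \<Longrightarrow> (M, N) \<in> cc R"
| ccV: "(Var i, Var i) \<in> cc R"
| ccA: "(M, N) \<in> cc R \<Longrightarrow> (M', N') \<in> cc R \<Longrightarrow> (App M M', App N N') \<in> cc R"
| ccL: "(M, N) \<in> cc R \<Longrightarrow> (Lam M, Lam N) \<in> cc R"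

lemma fill_cc: "length Ms = holes C \<Longrightarrow> list_all2 (\<lambda>M N. (M, N) \<in> R) Ms Ns \<Longrightarrow> (fill C Ms, fill C Ns) \<in> cc R"
proof (induction C arbitrary: Ms Ns)
  case (CVar x)
  then show ?case by (auto intro: cc.intros)
next
  case Hole
  then obtain M where "Ms = [M]" by (cases Ms) auto
  with Hole show ?case by (cases Ns) (auto intro: cc.intros)
next
  case (CApp C1 C2)
  have l: "length Ns = length Ms" using CApp.prems(2) list_all2_lengthD by metis
  have 1: "(fill C1 (take (holes C1) Ms), fill C1 (take (holes C1) Ns)) \<in> cc R"
    using CApp by auto
  have 2: "(fill C2 (drop (holes C1) Ms), fill C2 (drop (holes C1) Ns)) \<in> cc R"
    using CApp by auto
  show ?case using 1 2 by (auto intro: cc.intros)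
next
  case (CLam C)
  then show ?case by (auto intro: cc.intros)
qed

lemma cc_fill: "(M, N) \<in> cc R \<Longrightarrow> \<exists>C Ms Ns. M = fill C Ms \<and> N = fill C Ns \<and> length Ms = holes C \<and>
   list_all2 (\<lambda>M N. (M, N) \<in> R) Ms Ns"
proof (induction rule: cc.induct)
  case (ccR M N)
  then show ?case by (intro exI[of _ Hole] exI[of _ "[M]"] exI[of _ "[N]"]) auto
next
  case (ccV i)
  then show ?case by (intro exI[of _ "CVar i"] exI[of _ "[]"]) auto
next
  case (ccA M N M' N')
  then obtain C1 Ms1 Ns1 C2 Ms2 Ns2 where a: "M = fill C1 Ms1" "N = fill C1 Ns1" "length Ms1 = holes C1"
    "list_all2 (\<lambda>M N. (M, N) \<in> R) Ms1 Ns1" "M' = fill C2 Ms2" "N' = fill C2 Ns2" "length Ms2 = holes C2"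
    "list_all2 (\<lambda>M N. (M, N) \<in> R) Ms2 Ns2" by blast
  have "length Ns1 = holes C1" using a(3,4) list_all2_lengthD by metis
  then show ?case using a
    by (intro exI[of _ "CApp C1 C2"] exI[of _ "Ms1 @ Ms2"] exI[of _ "Ns1 @ Ns2"])
       (auto intro: list_all2_appendI)
next
  case (ccL M N)
  then obtain C Ms Ns where "M = fill C Ms" "N = fill C Ns" "length Ms = holes C"
    "list_all2 (\<lambda>M N. (M, N) \<in> R) Ms Ns" by blast
  then show ?case by (intro exI[of _ "CLam C"] exI[of _ Ms] exI[of _ Ns]) auto
qed

lemma ctx_closure_eq: "ctx_closure R = {(M, N). (M, N) \<in> cc R \<and> closed M \<and> closed N}"
  unfolding ctx_closure_def
  apply (rule set_eqI; clarsimp; rule iffI)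
   apply (auto intro: fill_cc)[1]
  apply (clarsimp dest!: cc_fill)
  apply blast
  done

lemma cc_refl: "(M, M) \<in> cc R"
  by (induction M) (auto intro: cc.intros)

lemma cc_idem: "(M, N) \<in> cc (cc R) \<Longrightarrow> (M, N) \<in> cc R"
  by (induction rule: cc.induct) (auto intro: cc.intros)

lemma cc_mono: "(M, N) \<in> cc R \<Longrightarrow> R \<subseteq> R' \<Longrightarrow> (M, N) \<in> cc R'"
  by (induction rule: cc.induct) (auto intro: cc.intros)

lemma cc_conv1: "(M, N) \<in> cc (R\<inverse>) \<Longrightarrow> (N, M) \<in> cc R"
  by (induction rule: cc.induct) (auto intro: cc.intros)

lemma cc_conv: "(M, N) \<in> cc (R\<inverse>) \<longleftrightarrow> (N, M) \<in> cc R"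
  using cc_conv1[of M N R] cc_conv1[of N M "R\<inverse>"] by auto

lemma ctx_closure_conv: "ctx_closure (R\<inverse>) = (ctx_closure R)\<inverse>"
  unfolding ctx_closure_eq by (auto simp: cc_conv)

lemma cc_subst: "(M, N) \<in> cc R \<Longrightarrow> rel_closed R \<Longrightarrow> (P, Q) \<in> cc R \<Longrightarrow> closed P \<Longrightarrow> closed Q \<Longrightarrow>
   (subst M k P, subst N k Q) \<in> cc R"
proof (induction arbitrary: k rule: cc.induct)
  case (ccR M N)
  then have "closed M" "closed N" by (auto simp: rel_closed_def)
  then show ?case using ccR subst_closed[of 0 M k P] subst_closed[of 0 N k Q]
    by (auto simp: closed_def intro: cc.intros)
next
  case (ccV i)
  then show ?case by (auto intro: cc.intros)
next
  case (ccA M N M' N')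
  then show ?case by (auto intro: cc.intros)
next
  case (ccL M N)
  have "lift 0 P = P" "lift 0 Q = Q" using ccL.prems lift_closed[of 0 _ 0] by (auto simp: closed_def)
  then show ?case using ccL by (auto intro: cc.intros)
qed

lemma bracket_closed: "(X, Y) \<in> bracket_v R R' \<Longrightarrow> rel_closed R \<Longrightarrow> rel_closed R' \<Longrightarrow> closed X \<and> closed Y"
  by (induction rule: bracket_v.induct) (auto simp: rel_closed_def closed_def)

lemma bracket_lam: "(Lam a, Y) \<in> bracket_v R R' \<Longrightarrow> (Lam a, Y) \<in> R"
  by (cases rule: bracket_v.cases) auto

lemma bracket_conv1: "(X, Y) \<in> bracket_v (R\<inverse>) (R'\<inverse>) \<Longrightarrow> (Y, X) \<in> bracket_v R R'"
  by (induction rule: bracket_v.induct) (auto intro: bracket_v.intros)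

lemma bracket_conv: "bracket_v (R\<inverse>) (R'\<inverse>) = (bracket_v R R')\<inverse>"
  using bracket_conv1[of _ _ R R'] bracket_conv1[of _ _ "R\<inverse>" "R'\<inverse>"] by auto


definition half :: "trm rel \<Rightarrow> trm rel \<Rightarrow> bool" where
  "half R1 R2 = (\<forall>M N. (M, N) \<in> R2 \<longrightarrow>
      (\<forall>M'. cbv M M' \<longrightarrow> (\<exists>N'. cbv_star N N' \<and> (M', N') \<in> R2)) \<and>
      (\<forall>M'. M = Lam M' \<longrightarrow> (\<exists>N'. cbv_star N (Lam N') \<and> (Lam M', Lam N') \<in> R1 \<and>
          (\<forall>P Q. is_val P \<longrightarrow> is_val Q \<longrightarrow> (P, Q) \<in> ctx_closure R1 \<longrightarrow>
              (subst M' 0 P, subst N' 0 Q) \<in> R2))))"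

definition bhalf :: "trm rel \<Rightarrow> trm rel \<Rightarrow> bool" where
  "bhalf R1 R2 = (\<forall>M N. (M, N) \<in> R2 \<longrightarrow>
      (\<forall>N'. cbv N N' \<longrightarrow> (\<exists>M'. cbv_star M M' \<and> (M', N') \<in> R2)) \<and>
      (\<forall>N'. N = Lam N' \<longrightarrow> (\<exists>M'. cbv_star M (Lam M') \<and> (Lam M', Lam N') \<in> R1 \<and>
          (\<forall>P Q. is_val P \<longrightarrow> is_val Q \<longrightarrow> (P, Q) \<in> ctx_closure R1 \<longrightarrow>
              (subst M' 0 P, subst N' 0 Q) \<in> R2))))"

lemma clb_iff0: "cbv_clb R1 R2 \<longleftrightarrow> coupled R1 R2 \<and> half R1 R2 \<and> bhalf R1 R2"
  unfolding cbv_clb_def half_def bhalf_def by blast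

lemma bhalf_conv: "half (R1\<inverse>) (R2\<inverse>) \<Longrightarrow> bhalf R1 R2"
  unfolding half_def bhalf_def ctx_closure_conv converse_iff
proof (intro allI impI)
  fix M N
  assume h: "\<forall>M N. (N, M) \<in> R2 \<longrightarrow>
         (\<forall>M'. cbv M M' \<longrightarrow> (\<exists>N'. cbv_star N N' \<and> (N', M') \<in> R2)) \<and>
         (\<forall>M'. M = Lam M' \<longrightarrow>
               (\<exists>N'. cbv_star N (Lam N') \<and> (Lam N', Lam M') \<in> R1 \<and>
                     (\<forall>P Q. is_val P \<longrightarrow> is_val Q \<longrightarrow> (Q, P) \<in> ctx_closure R1 \<longrightarrow>
                            (subst N' 0 Q, subst M' 0 P) \<in> R2)))" and r: "(M, N) \<in> R2"
  from h[rule_format, OF r]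
  show "(\<forall>N'. cbv N N' \<longrightarrow> (\<exists>M'. cbv_star M M' \<and> (M', N') \<in> R2)) \<and>
         (\<forall>N'. N = Lam N' \<longrightarrow>
               (\<exists>M'. cbv_star M (Lam M') \<and> (Lam M', Lam N') \<in> R1 \<and>
                     (\<forall>P Q. is_val P \<longrightarrow> is_val Q \<longrightarrow> (P, Q) \<in> ctx_closure R1 \<longrightarrow>
                            (subst M' 0 P, subst N' 0 Q) \<in> R2)))"
    by blast
qed

lemma coupled_conv: "coupled R1 R2 \<Longrightarrow> coupled (R1\<inverse>) (R2\<inverse>)"
  unfolding coupled_def rel_closed_def by auto

lemma S_app: "(a, b) \<in> ctx_closure R \<Longrightarrow> (c, d) \<in> ctx_closure R \<Longrightarrow> (App a c, App b d) \<in> ctx_closure R"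
  unfolding ctx_closure_eq by (auto simp: closed_def intro: cc.intros)

lemma R1_S: "coupled R1 R2 \<Longrightarrow> (a, b) \<in> R1 \<Longrightarrow> (a, b) \<in> ctx_closure R1"
  unfolding ctx_closure_eq coupled_def rel_closed_def by (auto intro: cc.intros)

lemma S_closed: "(a, b) \<in> ctx_closure R \<Longrightarrow> closed a \<and> closed b"
  unfolding ctx_closure_eq by auto

lemma lamV:
  assumes co: "coupled R1 R2" and h: "half R1 R2"
    and m: "(M, N) \<in> cc R1" "closed M" "closed N" "M = Lam M'"
  shows "\<exists>N'. cbv_star N (Lam N') \<and> (Lam M', Lam N') \<in> ctx_closure R1 \<and>
     (\<forall>P Q. is_val P \<longrightarrow> is_val Q \<longrightarrow> (P, Q) \<in> ctx_closure R1 \<longrightarrow>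
        (subst M' 0 P, subst N' 0 Q) \<in> bracket_v R2 (ctx_closure R1) \<union> ctx_closure R1)"
  using m(1)
proof (cases rule: cc.cases)
  case ccR
  then have "(M, N) \<in> R2" using co by (auto simp: coupled_def)
  then obtain N' where "cbv_star N (Lam N')" "(Lam M', Lam N') \<in> R1"
     "\<forall>P Q. is_val P \<longrightarrow> is_val Q \<longrightarrow> (P, Q) \<in> ctx_closure R1 \<longrightarrow> (subst M' 0 P, subst N' 0 Q) \<in> R2"
    using h m(4) unfolding half_def by blast
  then show ?thesis using R1_S[OF co] by (blast intro: bracket_v.base)
next
  case (ccL a b)
  have "\<forall>P Q. is_val P \<longrightarrow> is_val Q \<longrightarrow> (P, Q) \<in> ctx_closure R1 \<longrightarrow>
        (subst M' 0 P, subst b 0 Q) \<in> ctx_closure R1"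
  proof (intro allI impI)
    fix P Q assume "is_val P" "is_val Q" "(P, Q) \<in> ctx_closure R1"
    then have "(P, Q) \<in> cc R1" "closed P" "closed Q" unfolding ctx_closure_eq by auto
    moreover have "rel_closed R1" using co by (simp add: coupled_def)
    ultimately have "(subst a 0 P, subst b 0 Q) \<in> cc R1" using ccL cc_subst by blast
    moreover have "closed (subst a 0 P)" "closed (subst b 0 Q)"
      using ccL m \<open>closed P\<close> \<open>closed Q\<close> closed_subst[of 0 _ 0] by (auto simp: closed_def)
    ultimately show "(subst M' 0 P, subst b 0 Q) \<in> ctx_closure R1"
      using ccL m unfolding ctx_closure_eq by auto
  qed
  then show ?thesis using ccL m unfolding ctx_closure_eq by auto
qed (use m in auto)


abbreviation TT :: "trm rel \<Rightarrow> trm rel \<Rightarrow> trm rel" where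
  "TT R1 R2 \<equiv> bracket_v R2 (ctx_closure R1) \<union> ctx_closure R1"

lemma T_argR: "(a, b) \<in> ctx_closure R1 \<Longrightarrow> (x, y) \<in> TT R1 R2 \<Longrightarrow> (App a x, App b y) \<in> TT R1 R2"
  using S_app[of a b R1 x y] by (auto intro: bracket_v.argR)

lemma T_funL: "(x, y) \<in> TT R1 R2 \<Longrightarrow> is_val v \<Longrightarrow> is_val w \<Longrightarrow> (v, w) \<in> ctx_closure R1 \<Longrightarrow>
   (App x v, App y w) \<in> TT R1 R2"
  using S_app[of x y R1 v w] by (auto intro: bracket_v.funL)

lemma lam_val: "cbv_star N (Lam d) \<Longrightarrow> closed N \<Longrightarrow> is_val (Lam d)"
  using cbv_star_closed is_val_def by blast

lemma half_step: "half R1 R2 \<Longrightarrow> (M, N) \<in> R2 \<Longrightarrow> cbv M M' \<Longrightarrow> \<exists>N'. cbv_star N N' \<and> (M', N') \<in> R2"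
  unfolding half_def by blast

lemma half_lam: "half R1 R2 \<Longrightarrow> (M, N) \<in> R2 \<Longrightarrow> M = Lam M' \<Longrightarrow> \<exists>N'. cbv_star N (Lam N') \<and> (Lam M', Lam N') \<in> R1 \<and>
          (\<forall>P Q. is_val P \<longrightarrow> is_val Q \<longrightarrow> (P, Q) \<in> ctx_closure R1 \<longrightarrow>
              (subst M' 0 P, subst N' 0 Q) \<in> R2)"
  unfolding half_def by blast

lemma stepS:
  assumes co: "coupled R1 R2" and h: "half R1 R2"
  shows "(M, N) \<in> cc R1 \<Longrightarrow> closed M \<Longrightarrow> closed N \<Longrightarrow> cbv M M' \<Longrightarrow>
     \<exists>N'. cbv_star N N' \<and> (M', N') \<in> TT R1 R2"
proof (induction arbitrary: M' rule: cc.induct)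
  case (ccR M N)
  then have "(M, N) \<in> R2" using co by (auto simp: coupled_def)
  then obtain N' where "cbv_star N N'" "(M', N') \<in> R2" using half_step[OF h] ccR by blast
  then show ?case by (blast intro: bracket_v.base)
next
  case (ccV i)
  then show ?case by (simp add: closed_def)
next
  case (ccL M N)
  then show ?case by (auto elim: cbv.cases)
next
  case (ccA a b a' b')
  have cl: "closed a" "closed a'" "closed b" "closed b'" using ccA.prems by (auto simp: closed_def)
  from ccA.prems(3) show ?case
  proof (cases rule: cbv.cases)
    case (appR a'')
    with ccA.IH(2)[OF cl(2,4)] obtain b'' where "cbv_star b' b''" "(a'', b'') \<in> TT R1 R2" by blast
    moreover have "(a, b) \<in> ctx_closure R1" using ccA cl unfolding ctx_closure_eq by auto
    ultimately have "cbv_star (App b b') (App b b'')" "(App a a'', App b b'') \<in> TT R1 R2"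
      using T_argR star_appR by blast+
    then show ?thesis using appR(1) by blast
  next
    case (appL a1)
    then obtain c where c: "a' = Lam c" by (auto simp: is_val_def)
    from lamV[OF co h ccA(2) cl(2,4) c] obtain d where d: "cbv_star b' (Lam d)" "(a', Lam d) \<in> ctx_closure R1"
      using c by blast
    have vd: "is_val (Lam d)" using d cl lam_val by blast
    from ccA.IH(1)[OF cl(1,3) appL(2)] obtain b1 where b1: "cbv_star b b1" "(a1, b1) \<in> TT R1 R2" by blast
    have "cbv_star (App b b') (App b1 (Lam d))"
      using rtranclp_trans[OF star_appR[OF d(1), of b] star_appL[OF b1(1) vd]] .
    moreover have "(App a1 a', App b1 (Lam d)) \<in> TT R1 R2"
      using T_funL[OF b1(2) appL(3) vd d(2)] .
    ultimately show ?thesis using appL(1) by blast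
  next
    case (beta P)
    have bb: "a = Lam P" "is_val a'" using beta by auto
    from lamV[OF co h ccA(1) cl(1,3) bb(1)] obtain Q where Q: "cbv_star b (Lam Q)"
      "\<forall>P' Q'. is_val P' \<longrightarrow> is_val Q' \<longrightarrow> (P', Q') \<in> ctx_closure R1 \<longrightarrow>
        (subst P 0 P', subst Q 0 Q') \<in> TT R1 R2" by blast
    obtain c where c: "a' = Lam c" using beta by (auto simp: is_val_def)
    from lamV[OF co h ccA(2) cl(2,4) c] obtain d where d: "cbv_star b' (Lam d)" "(a', Lam d) \<in> ctx_closure R1"
      using c by blast
    have vd: "is_val (Lam d)" using d cl lam_val by blast
    have "cbv_star (App b b') (subst Q 0 (Lam d))"
      using rtranclp_trans[OF star_appR[OF d(1), of b] star_appL[OF Q(1) vd]] cbv.beta[OF vd, of Q]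
      by (rule rtranclp.rtrancl_into_rtrancl)
    moreover have "(subst P 0 a', subst Q 0 (Lam d)) \<in> TT R1 R2" using Q(2) bb(2) vd d(2) by blast
    ultimately show ?thesis using beta by blast
  qed
qed

lemma stepB:
  assumes co: "coupled R1 R2" and h: "half R1 R2"
  shows "(M, N) \<in> bracket_v R2 (ctx_closure R1) \<Longrightarrow> cbv M M' \<Longrightarrow>
     \<exists>N'. cbv_star N N' \<and> (M', N') \<in> TT R1 R2"
proof (induction arbitrary: M' rule: bracket_v.induct)
  case (base X Y)
  then obtain N' where "cbv_star Y N'" "(M', N') \<in> R2" using half_step[OF h] by blast
  then show ?case by (blast intro: bracket_v.base)
next
  case (argR M0 N0 X Y)
  have rc: "rel_closed R2" "rel_closed (ctx_closure R1)"
    using co by (auto simp: coupled_def rel_closed_def ctx_closure_eq)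
  have clXY: "closed X" "closed Y" using bracket_closed[OF argR(2) rc] by auto
  have S0: "(M0, N0) \<in> cc R1" "closed M0" "closed N0" using argR(1) unfolding ctx_closure_eq by auto
  from argR.prems show ?case
  proof (cases rule: cbv.cases)
    case (appR X')
    with argR.IH obtain Y' where "cbv_star Y Y'" "(X', Y') \<in> TT R1 R2" by blast
    then have "cbv_star (App N0 Y) (App N0 Y')" "(App M0 X', App N0 Y') \<in> TT R1 R2"
      using T_argR[OF argR(1)] star_appR by blast+
    then show ?thesis using appR(1) by blast
  next
    case (appL M0')
    then obtain x where x: "X = Lam x" by (auto simp: is_val_def)
    have "(X, Y) \<in> R2" using bracket_lam argR(2) x by blast
    then obtain y where y: "cbv_star Y (Lam y)" "(X, Lam y) \<in> R1" using half_lam[OF h _ x] x by fastforce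
    have vy: "is_val (Lam y)" using y clXY lam_val by blast
    from stepS[OF co h S0 appL(2)] obtain N0' where n: "cbv_star N0 N0'" "(M0', N0') \<in> TT R1 R2" by blast
    have "cbv_star (App N0 Y) (App N0' (Lam y))"
      using rtranclp_trans[OF star_appR[OF y(1), of N0] star_appL[OF n(1) vy]] .
    moreover have "(App M0' X, App N0' (Lam y)) \<in> TT R1 R2"
      using T_funL[OF n(2) appL(3) vy R1_S[OF co y(2)]] .
    ultimately show ?thesis using appL by blast
  next
    case (beta P)
    have bb: "M0 = Lam P" "is_val X" using beta by auto
    from lamV[OF co h S0 bb(1)] obtain Q where Q: "cbv_star N0 (Lam Q)"
      "\<forall>P' Q'. is_val P' \<longrightarrow> is_val Q' \<longrightarrow> (P', Q') \<in> ctx_closure R1 \<longrightarrow>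
        (subst P 0 P', subst Q 0 Q') \<in> TT R1 R2" by blast
    obtain x where x: "X = Lam x" using beta by (auto simp: is_val_def)
    have "(X, Y) \<in> R2" using bracket_lam argR(2) x by blast
    then obtain y where y: "cbv_star Y (Lam y)" "(X, Lam y) \<in> R1" using half_lam[OF h _ x] x by fastforce
    have vy: "is_val (Lam y)" using y clXY lam_val by blast
    have "cbv_star (App N0 Y) (subst Q 0 (Lam y))"
      using rtranclp_trans[OF star_appR[OF y(1), of N0] star_appL[OF Q(1) vy]] cbv.beta[OF vy, of Q]
      by (rule rtranclp.rtrancl_into_rtrancl)
    moreover have "(subst P 0 X, subst Q 0 (Lam y)) \<in> TT R1 R2"
      using Q(2) bb(2) vy R1_S[OF co y(2)] by blast
    ultimately show ?thesis using beta by blast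
  qed
next
  case (funL V W X Y)
  from funL.prems show ?case
  proof (cases rule: cbv.cases)
    case (appR V')
    then show ?thesis using funL(1) by (auto simp: is_val_def elim: cbv.cases)
  next
    case (appL X')
    with funL.IH obtain Y' where "cbv_star Y Y'" "(X', Y') \<in> TT R1 R2" by blast
    then have "cbv_star (App Y W) (App Y' W)" "(App X' V, App Y' W) \<in> TT R1 R2"
      using T_funL funL(1-3) star_appL by blast+
    then show ?thesis using appL(1) by blast
  next
    case (beta P)
    have bb: "X = Lam P" using beta by auto
    have "(X, Y) \<in> R2" using bracket_lam funL(4) bb by blast
    then obtain Q where Q: "cbv_star Y (Lam Q)"
      "\<forall>P' Q'. is_val P' \<longrightarrow> is_val Q' \<longrightarrow> (P', Q') \<in> ctx_closure R1 \<longrightarrow> (subst P 0 P', subst Q 0 Q') \<in> R2"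
      using half_lam[OF h _ bb] by blast
    have "cbv_star (App Y W) (subst Q 0 W)"
      using star_appL[OF Q(1) funL(2)] cbv.beta[OF funL(2), of Q] by (rule rtranclp.rtrancl_into_rtrancl)
    moreover have "(subst P 0 V, subst Q 0 W) \<in> TT R1 R2"
      using Q(2) funL(1-3) by (blast intro: bracket_v.base)
    ultimately show ?thesis using beta by blast
  qed
qed

lemma ctx_ctx: "(P, Q) \<in> ctx_closure (ctx_closure R) \<Longrightarrow> (P, Q) \<in> ctx_closure R"
proof -
  assume a: "(P, Q) \<in> ctx_closure (ctx_closure R)"
  have "ctx_closure R \<subseteq> cc R" unfolding ctx_closure_eq by auto
  then show ?thesis using a unfolding ctx_closure_eq[of "ctx_closure R"]
    by (auto simp: ctx_closure_eq intro: cc_idem cc_mono)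
qed

lemma key:
  assumes co: "coupled R1 R2" and h: "half R1 R2"
  shows "coupled (ctx_closure R1) (TT R1 R2) \<and> half (ctx_closure R1) (TT R1 R2)"
proof
  have rc: "rel_closed R2" "rel_closed (ctx_closure R1)"
    using co by (auto simp: coupled_def rel_closed_def ctx_closure_eq)
  show "coupled (ctx_closure R1) (TT R1 R2)"
    unfolding coupled_def using bracket_closed[OF _ rc] rc(2) by (auto simp: rel_closed_def)
  show "half (ctx_closure R1) (TT R1 R2)"
    unfolding half_def
  proof (intro allI impI conjI)
    fix M N M' assume a: "(M, N) \<in> TT R1 R2" "cbv M M'"
    show "\<exists>N'. cbv_star N N' \<and> (M', N') \<in> TT R1 R2"
    proof (cases "(M, N) \<in> ctx_closure R1")
      case True
      then have "(M, N) \<in> cc R1" "closed M" "closed N" unfolding ctx_closure_eq by auto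
      from stepS[OF co h this a(2)] show ?thesis .
    next
      case False
      then have "(M, N) \<in> bracket_v R2 (ctx_closure R1)" using a by blast
      from stepB[OF co h this a(2)] show ?thesis .
    qed
  next
    fix M N M' assume m: "(M, N) \<in> TT R1 R2" "M = Lam M'"
    show "\<exists>N'. cbv_star N (Lam N') \<and> (Lam M', Lam N') \<in> ctx_closure R1 \<and>
       (\<forall>P Q. is_val P \<longrightarrow> is_val Q \<longrightarrow> (P, Q) \<in> ctx_closure (ctx_closure R1) \<longrightarrow>
          (subst M' 0 P, subst N' 0 Q) \<in> TT R1 R2)"
    proof (cases "(M, N) \<in> ctx_closure R1")
      case True
      then have "(M, N) \<in> cc R1" "closed M" "closed N" unfolding ctx_closure_eq by auto
      from lamV[OF co h this m(2)] show ?thesis using ctx_ctx by blast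
    next
      case False
      then have "(M, N) \<in> R2" using m bracket_lam by blast
      then obtain N' where "cbv_star N (Lam N')" "(Lam M', Lam N') \<in> R1"
        "\<forall>P Q. is_val P \<longrightarrow> is_val Q \<longrightarrow> (P, Q) \<in> ctx_closure R1 \<longrightarrow> (subst M' 0 P, subst N' 0 Q) \<in> R2"
        using half_lam[OF h _ m(2)] by blast
      then show ?thesis using R1_S[OF co] ctx_ctx by (blast intro: bracket_v.base)
    qed
  qed
qed


lemma half_conv: "bhalf R1 R2 \<Longrightarrow> half (R1\<inverse>) (R2\<inverse>)"
  unfolding half_def bhalf_def ctx_closure_conv converse_iff
proof (intro allI impI)
  fix M N
  assume h: "\<forall>M N. (M, N) \<in> R2 \<longrightarrow>
      (\<forall>N'. cbv N N' \<longrightarrow> (\<exists>M'. cbv_star M M' \<and> (M', N') \<in> R2)) \<and>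
      (\<forall>N'. N = Lam N' \<longrightarrow> (\<exists>M'. cbv_star M (Lam M') \<and> (Lam M', Lam N') \<in> R1 \<and>
          (\<forall>P Q. is_val P \<longrightarrow> is_val Q \<longrightarrow> (P, Q) \<in> ctx_closure R1 \<longrightarrow>
              (subst M' 0 P, subst N' 0 Q) \<in> R2)))" and r: "(N, M) \<in> R2"
  from h[rule_format, OF r]
  show "(\<forall>M'. cbv M M' \<longrightarrow> (\<exists>N'. cbv_star N N' \<and> (N', M') \<in> R2)) \<and>
         (\<forall>M'. M = Lam M' \<longrightarrow>
               (\<exists>N'. cbv_star N (Lam N') \<and> (Lam N', Lam M') \<in> R1 \<and>
                     (\<forall>P Q. is_val P \<longrightarrow> is_val Q \<longrightarrow> (Q, P) \<in> ctx_closure R1 \<longrightarrow>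
                            (subst N' 0 Q, subst M' 0 P) \<in> R2)))"
    by blast
qed

lemma part1:
  assumes "cbv_clb R1 R2"
  shows "cbv_clb (ctx_closure R1) (bracket_v R2 (ctx_closure R1) \<union> ctx_closure R1)"
proof -
  have co: "coupled R1 R2" and h: "half R1 R2" and hb: "half (R1\<inverse>) (R2\<inverse>)"
    using assms half_conv unfolding clb_iff0 by auto
  have k1: "coupled (ctx_closure R1) (TT R1 R2)" "half (ctx_closure R1) (TT R1 R2)"
    using key[OF co h] by auto
  have "half (ctx_closure (R1\<inverse>)) (TT (R1\<inverse>) (R2\<inverse>))"
    using key[OF coupled_conv[OF co] hb] by auto
  moreover have "TT (R1\<inverse>) (R2\<inverse>) = (TT R1 R2)\<inverse>"
    unfolding ctx_closure_conv bracket_conv by auto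
  ultimately have "half ((ctx_closure R1)\<inverse>) ((TT R1 R2)\<inverse>)"
    unfolding ctx_closure_conv by simp
  then have "bhalf (ctx_closure R1) (TT R1 R2)" by (rule bhalf_conv)
  then show ?thesis using k1 unfolding clb_iff0 by auto
qed

lemma efill_bracket:
  assumes "cbv_clb R1 R2" "(E, F) \<in> R2"
  shows "ectx_ok \<E> \<Longrightarrow> (efill \<E> E, efill \<E> F) \<in> bracket_v R2 (ctx_closure R1)"
proof (induction \<E>)
  case EHole
  then show ?case using assms(2) by (auto intro: bracket_v.base)
next
  case (EArg N \<E>)
  have "(N, N) \<in> ctx_closure R1" using EArg.prems cc_refl unfolding ctx_closure_eq by auto
  then show ?case using EArg by (auto intro: bracket_v.argR)
next
  case (EFun \<E> V)
  have "(V, V) \<in> ctx_closure R1" using EFun.prems cc_refl[of V R1] by (auto simp: ctx_closure_eq is_val_def)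
  then show ?case using EFun by (auto intro: bracket_v.funL)
qed

theorem mainTheorem16:
  shows "(\<forall>R1 R2. cbv_clb R1 R2 \<longrightarrow>
            cbv_clb (ctx_closure R1) (bracket_v R2 (ctx_closure R1) \<union> ctx_closure R1))
       \<and> (\<forall>M N C. (M, N) \<in> approx1 \<longrightarrow> closed (fill_all C M) \<longrightarrow> closed (fill_all C N) \<longrightarrow>
            (fill_all C M, fill_all C N) \<in> approx1)
       \<and> (\<forall>E F \<E>. (E, F) \<in> approx2 \<longrightarrow> ectx_ok \<E> \<longrightarrow>
            (efill \<E> E, efill \<E> F) \<in> approx2)"
proof (intro conjI allI impI)
  fix R1 R2 assume "cbv_clb R1 R2"
  then show "cbv_clb (ctx_closure R1) (bracket_v R2 (ctx_closure R1) \<union> ctx_closure R1)"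
    by (rule part1)
next
  fix M N C assume a: "(M, N) \<in> approx1" "closed (fill_all C M)" "closed (fill_all C N)"
  then obtain R1 R2 where r: "cbv_clb R1 R2" "(M, N) \<in> R1" unfolding approx1_def by blast
  have "(fill_all C M, fill_all C N) \<in> ctx_closure R1"
    unfolding ctx_closure_def
    apply (rule CollectI)
    apply (rule exI[of _ C], rule exI[of _ "replicate (holes C) M"], rule exI[of _ "replicate (holes C) N"])
    using a(2,3) r(2) by (auto simp: list_all2_conv_all_nth fill_all_def)
  then show "(fill_all C M, fill_all C N) \<in> approx1"
    using part1[OF r(1)] unfolding approx1_def by blast
next
  fix E F \<E> assume a: "(E, F) \<in> approx2" "ectx_ok \<E>"
  then obtain R1 R2 where r: "cbv_clb R1 R2" "(E, F) \<in> R2" unfolding approx2_def by blast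
  have "(efill \<E> E, efill \<E> F) \<in> bracket_v R2 (ctx_closure R1) \<union> ctx_closure R1"
    using efill_bracket[OF r a(2)] by blast
  then show "(efill \<E> E, efill \<E> F) \<in> approx2"
    using part1[OF r(1)] unfolding approx2_def by blast
qed

end
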